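(* Let $a<b$ and let $w:[a-b,b-a]\to\mathbb R\cup\{+\infty\}$ be an even continuous function. Then the interaction $(x,y)\mapsto w(x-y)$ is well-ordering on $[a,b]$ if and only if (i) $w$ is convex, and (ii) $w(d_0+\delta)+w(d_1+\delta)\le w(d_1)+w(d_0)$ for all $d_0,d_1,\delta>0$ with $d_0+d_1+\delta\le b-a$. Moreover, $(x,y)\mapsto w(x-y)$ is strictly well-ordering on $[a,b]$ if and only if $w$ is strictly convex and the inequality in (ii) is strict for all such $d_0,d_1,\delta>0$.
   Context: Well-ordering: a continuous symmetric $W:J\times J\to\mathbb R\cup\{+\infty\}$ is well-ordering on $J\subset\mathbb R$ if for all $x_1\le x_2\le x_3\le x_4$ in $J$, $W(x_1,x_3)+W(x_2,x_4)=\min\{W(x_{\sigma(1)},x_{\sigma(2)})+W(x_{\sigma(3)},x_{\sigma(4)}):\sigma\text{ a permutation of }\{1,2,3,4\}\}$. It is strictly well-ordering if in addition, for such $x_1\le\dots\le x_4$ and a permutation $\sigma$, equality $W(x_1,x_3)+W(x_2,x_4)=W(x_{\sigma(1)},x_{\sigma(2)})+W(x_{\sigma(3)},x_{\sigma(4)})$ holds only if either $W(x_1,x_3)+W(x_2,x_4)=\infty$, or $\delta_{x_1}+\delta_{x_3}=\delta_{x_{\sigma(1)}}+\delta_{x_{\sigma(2)}}$, or $\delta_{x_1}+\delta_{x_3}=\delta_{x_{\sigma(3)}}+\delta_{x_{\sigma(4)}}$. *)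

theory Defs
  imports "HOL-Analysis.Analysis" "HOL-Library.Multiset"
begin

text \<open>Values in \<open>\<real> \<union> {+\<infinity>}\<close> are modelled as extended reals that are never \<open>-\<infinity>\<close>.
  Points \<open>x\<^sub>1,\<dots>,x\<^sub>4\<close> are modelled as \<open>x 1, \<dots>, x 4\<close> for \<open>x :: nat \<Rightarrow> real\<close>;
  permutations of \<open>{1,2,3,4}\<close> are \<open>\<sigma> permutes {1..4}\<close>.
  The measure \<open>\<delta>\<^sub>p + \<delta>\<^sub>q\<close> is represented by the multiset \<open>{#p, q#}\<close>.\<close>

definition pair_cost :: "(real \<Rightarrow> real \<Rightarrow> ereal) \<Rightarrow> (nat \<Rightarrow> real) \<Rightarrow> (nat \<Rightarrow> nat) \<Rightarrow> ereal" where
  "pair_cost W x \<sigma> = W (x (\<sigma> 1)) (x (\<sigma> 2)) + W (x (\<sigma> 3)) (x (\<sigma> 4))"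

definition well_ordering :: "(real \<Rightarrow> real \<Rightarrow> ereal) \<Rightarrow> real set \<Rightarrow> bool" where
  "well_ordering W J \<longleftrightarrow>
     (\<forall>x\<in>J. \<forall>y\<in>J. W x y \<noteq> -\<infinity>) \<and>
     (\<forall>x\<in>J. \<forall>y\<in>J. W x y = W y x) \<and>
     continuous_on (J \<times> J) (\<lambda>(x, y). W x y) \<and>
     (\<forall>x :: nat \<Rightarrow> real. (\<forall>i\<in>{1..4}. x i \<in> J) \<and> x 1 \<le> x 2 \<and> x 2 \<le> x 3 \<and> x 3 \<le> x 4 \<longrightarrow>
        W (x 1) (x 3) + W (x 2) (x 4) = Min {pair_cost W x \<sigma> | \<sigma>. \<sigma> permutes {1..4}})"

definition strictly_well_ordering :: "(real \<Rightarrow> real \<Rightarrow> ereal) \<Rightarrow> real set \<Rightarrow> bool" where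
  "strictly_well_ordering W J \<longleftrightarrow> well_ordering W J \<and>
     (\<forall>x :: nat \<Rightarrow> real. \<forall>\<sigma>. (\<forall>i\<in>{1..4}. x i \<in> J) \<and> x 1 \<le> x 2 \<and> x 2 \<le> x 3 \<and> x 3 \<le> x 4
        \<and> \<sigma> permutes {1..4} \<and> W (x 1) (x 3) + W (x 2) (x 4) = pair_cost W x \<sigma> \<longrightarrow>
        W (x 1) (x 3) + W (x 2) (x 4) = \<infinity> \<or>
        {# x 1, x 3 #} = {# x (\<sigma> 1), x (\<sigma> 2) #} \<or>
        {# x 1, x 3 #} = {# x (\<sigma> 3), x (\<sigma> 4) #})"

definition ereal_convex_on :: "real set \<Rightarrow> (real \<Rightarrow> ereal) \<Rightarrow> bool" where
  "ereal_convex_on S w \<longleftrightarrow> convex S \<and>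
     (\<forall>x\<in>S. \<forall>y\<in>S. \<forall>t::real. 0 < t \<and> t < 1 \<longrightarrow>
        w ((1 - t) * x + t * y) \<le> ereal (1 - t) * w x + ereal t * w y)"

text \<open>Strict convexity: strict inequality, except when the left-hand side is \<open>+\<infinity>\<close>
  (then both sides are \<open>+\<infinity>\<close>; convention for functions with values in \<open>\<real> \<union> {+\<infinity>}\<close>).\<close>
definition ereal_strictly_convex_on :: "real set \<Rightarrow> (real \<Rightarrow> ereal) \<Rightarrow> bool" where
  "ereal_strictly_convex_on S w \<longleftrightarrow> ereal_convex_on S w \<and>
     (\<forall>x\<in>S. \<forall>y\<in>S. \<forall>t::real. x \<noteq> y \<and> 0 < t \<and> t < 1 \<and> w ((1 - t) * x + t * y) \<noteq> \<infinity> \<longrightarrow>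
        w ((1 - t) * x + t * y) < ereal (1 - t) * w x + ereal t * w y)"

end

theory Submission
  imports Defs
begin

lemma limle_left:
  fixes f g :: "real \<Rightarrow> 'a::linorder_topology"
  assumes "lo < hi" "continuous_on {lo..hi} f" "continuous_on {lo..hi} g"
    "\<And>x. lo < x \<Longrightarrow> x \<le> hi \<Longrightarrow> f x \<le> g x"
  shows "f lo \<le> g lo"
proof -
  have "(f \<longlongrightarrow> f lo) (at lo within {lo..hi})" "(g \<longlongrightarrow> g lo) (at lo within {lo..hi})"
    using assms(1,2,3) by (auto simp: continuous_on_def)
  then have 1: "(f \<longlongrightarrow> f lo) (at_right lo)" "(g \<longlongrightarrow> g lo) (at_right lo)"
    using at_within_Icc_at_right[OF assms(1)] by auto
  have "eventually (\<lambda>x. f x \<le> g x) (at_right lo)"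
    unfolding eventually_at_right[OF assms(1)] using assms(4) by (intro exI[of _ hi]) (auto simp: assms(1))
  then show ?thesis using tendsto_le[OF _ 1(2) 1(1)] by auto
qed

lemma limle_right:
  fixes f g :: "real \<Rightarrow> 'a::linorder_topology"
  assumes "lo < hi" "continuous_on {lo..hi} f" "continuous_on {lo..hi} g"
    "\<And>x. lo \<le> x \<Longrightarrow> x < hi \<Longrightarrow> f x \<le> g x"
  shows "f hi \<le> g hi"
proof -
  have "(f \<longlongrightarrow> f hi) (at hi within {lo..hi})" "(g \<longlongrightarrow> g hi) (at hi within {lo..hi})"
    using assms(1,2,3) by (auto simp: continuous_on_def)
  then have 1: "(f \<longlongrightarrow> f hi) (at_left hi)" "(g \<longlongrightarrow> g hi) (at_left hi)"
    using at_within_Icc_at_left[OF assms(1)] by auto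
  have "eventually (\<lambda>x. f x \<le> g x) (at_left hi)"
    unfolding eventually_at_left[OF assms(1)] using assms(4) by (intro exI[of _ lo]) (auto simp: assms(1))
  then show ?thesis using tendsto_le[OF _ 1(2) 1(1)] by auto
qed

lemma continuous_on_add_ereal:
  fixes f g :: "real \<Rightarrow> ereal"
  assumes "continuous_on S f" "continuous_on S g" "\<And>x. x \<in> S \<Longrightarrow> f x \<noteq> -\<infinity>"
    "\<And>x. x \<in> S \<Longrightarrow> g x \<noteq> -\<infinity>"
  shows "continuous_on S (\<lambda>x. f x + g x)"
  unfolding continuous_on_def
proof
  fix x assume x: "x \<in> S"
  show "((\<lambda>x. f x + g x) \<longlongrightarrow> f x + g x) (at x within S)"
    apply (rule tendsto_add_ereal_general)
    using assms x by (auto simp: continuous_on_def)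
qed

lemma continuous_on_real_of_ereal:
  fixes f :: "real \<Rightarrow> ereal"
  assumes "continuous_on S f" "\<And>x. x \<in> S \<Longrightarrow> \<bar>f x\<bar> \<noteq> \<infinity>"
  shows "continuous_on S (\<lambda>x. real_of_ereal (f x))"
  unfolding continuous_on_def
proof
  fix x assume x: "x \<in> S"
  have e: "\<And>y. y \<in> S \<Longrightarrow> f y = ereal (real_of_ereal (f y))" using assms(2) by (simp add: ereal_real)
  have "(f \<longlongrightarrow> f x) (at x within S)" using assms x by (auto simp: continuous_on_def)
  moreover have "eventually (\<lambda>y. f y = ereal (real_of_ereal (f y))) (at x within S)"
    using e by (auto simp: eventually_at_filter)
  ultimately have "((\<lambda>y. ereal (real_of_ereal (f y))) \<longlongrightarrow> ereal (real_of_ereal (f x))) (at x within S)"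
    using tendsto_cong e[OF x] by fastforce
  then show "((\<lambda>y. real_of_ereal (f y)) \<longlongrightarrow> real_of_ereal (f x)) (at x within S)" by simp
qed

lemma midpoint_chord:
  fixes g :: "real \<Rightarrow> real"
  assumes xy: "x < y" and cont: "continuous_on {x..y} g"
    and mid: "\<And>m h. 0 \<le> h \<Longrightarrow> x \<le> m - h \<Longrightarrow> m + h \<le> y \<Longrightarrow> 2 * g m \<le> g (m - h) + g (m + h)"
    and z: "z \<in> {x..y}"
  shows "g z \<le> g x + (z - x) / (y - x) * (g y - g x)"
proof (rule ccontr)
  assume neg: "\<not> ?thesis"
  define c where "c = (g y - g x) / (y - x)"
  define \<phi> where "\<phi> s = g s - (g x + (s - x) * c)" for s
  have phimid: "2 * \<phi> m \<le> \<phi> (m - h) + \<phi> (m + h)" if "0 \<le> h" "x \<le> m - h" "m + h \<le> y" for m h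
  proof -
    have "(m - h - x) * c + (m + h - x) * c = 2 * ((m - x) * c)" by algebra
    then show ?thesis using mid[OF that] unfolding \<phi>_def by (simp add: algebra_simps)
  qed
  have cphi: "continuous_on {x..y} \<phi>" unfolding \<phi>_def by (intro continuous_intros cont)
  obtain zm where zm: "zm \<in> {x..y}" "\<And>s. s \<in> {x..y} \<Longrightarrow> \<phi> s \<le> \<phi> zm"
    using continuous_attains_sup[OF compact_Icc _ cphi] xy by fastforce
  define M where "M = \<phi> zm"
  have "\<phi> z > 0" using neg unfolding \<phi>_def c_def by simp
  then have Mpos: "M > 0" using zm z M_def by fastforce
  define K where "K = {x..y} \<inter> \<phi> -` {M}"
  have Kc: "closed K" unfolding K_def by (rule continuous_closed_preimage[OF cphi]) auto
  have Kne: "K \<noteq> {}" using zm M_def K_def by auto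
  have Kb: "bdd_below K" unfolding K_def by (rule bdd_belowI[of _ x]) auto
  define m where "m = Inf K"
  have mK: "m \<in> K" using closed_contains_Inf[OF Kne Kb Kc] m_def by simp
  have phx: "\<phi> x = 0" "\<phi> y = 0" unfolding \<phi>_def c_def using xy by auto
  have m1: "m \<noteq> x" "m \<noteq> y" "x \<le> m" "m \<le> y" using mK Mpos phx unfolding K_def by auto
  have mx: "x < m" "m < y" using m1 by auto
  define h where "h = min (m - x) (y - m)"
  have h: "0 < h" "x \<le> m - h" "m + h \<le> y" using mx h_def by auto
  have "m - h \<notin> K"
  proof
    assume "m - h \<in> K"
    then have "m \<le> m - h" unfolding m_def using Kb by (rule cInf_lower)
    then show False using h by auto
  qed
  moreover have "m - h \<in> {x..y}" using h mx by auto
  ultimately have "\<phi> (m - h) \<noteq> M" unfolding K_def by auto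
  moreover have "\<phi> (m - h) \<le> M" using zm \<open>m - h \<in> {x..y}\<close> unfolding M_def by auto
  ultimately have "\<phi> (m - h) < M" by auto
  moreover have "\<phi> (m + h) \<le> M" using zm h mx unfolding M_def by auto
  moreover have "\<phi> m = M" using mK K_def by auto
  ultimately show False using phimid[of h m] h by linarith
qed

definition Jn :: "(real \<Rightarrow> ereal) \<Rightarrow> real \<Rightarrow> bool" where
 "Jn w L \<longleftrightarrow> (\<forall>p q r. 0 \<le> p \<and> 0 \<le> q \<and> 0 \<le> r \<and> p + q + r \<le> L \<longrightarrow> w (p + q) + w (q + r) \<le> w q + w (p + q + r))"

lemma Jn_uv:
  assumes "Jn w L" "0 \<le> u" "u \<le> s" "s \<le> v" "v \<le> L"
  shows "w s + w (u + v - s) \<le> w u + w v"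
proof -
  have "w ((s - u) + u) + w (u + (v - s)) \<le> w u + w ((s - u) + u + (v - s))"
    using assms(1)[unfolded Jn_def, rule_format, of "s - u" u "v - s"] assms by auto
  moreover have "(s - u) + u = s" "u + (v - s) = u + v - s" "(s - u) + u + (v - s) = v" by auto
  ultimately show ?thesis by simp
qed

lemma Jn_finite:
  assumes "Jn w L" "\<forall>z\<in>{0..L}. w z \<noteq> -\<infinity>" "0 \<le> x" "x \<le> s" "s \<le> y" "y \<le> L"
    "w x \<noteq> \<infinity>" "w y \<noteq> \<infinity>"
  shows "\<bar>w s\<bar> \<noteq> \<infinity>"
proof -
  have 1: "w s + w (x + y - s) \<le> w x + w y" using Jn_uv assms by blast
  have 2: "w (x + y - s) \<noteq> -\<infinity>" "w s \<noteq> -\<infinity>" "w x \<noteq> -\<infinity>" "w y \<noteq> -\<infinity>" using assms(2-6) by auto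
  have "w s \<noteq> \<infinity>"
  proof
    assume "w s = \<infinity>"
    then have "w s + w (x + y - s) = \<infinity>" using 2 by simp
    then have "\<infinity> \<le> w x + w y" using 1 by metis
    then have "w x + w y = \<infinity>" by simp
    then show False using assms(7,8) 2 by simp
  qed
  then show ?thesis using 2 by auto
qed

lemma conv_aux:
  assumes H1: "\<forall>z\<in>{0..L}. w z \<noteq> -\<infinity>" and H2: "continuous_on {0..L} w" and J: "Jn w L"
    and xy: "0 \<le> x" "x < y" "y \<le> L" and fx: "w x \<noteq> \<infinity>" "w y \<noteq> \<infinity>" and t: "0 < t" "t < 1"
  shows "w ((1 - t) * x + t * y) \<le> ereal (1 - t) * w x + ereal t * w y"
proof -
  have fin: "\<bar>w s\<bar> \<noteq> \<infinity>" if "s \<in> {x..y}" for s using Jn_finite[OF J H1 xy(1) _ _ xy(3) fx] that by auto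
  define g where "g s = real_of_ereal (w s)" for s
  have ws: "w s = ereal (g s)" if "s \<in> {x..y}" for s using fin[OF that] unfolding g_def by (simp add: ereal_real)
  have cg: "continuous_on {x..y} g" unfolding g_def
    by (rule continuous_on_real_of_ereal[OF continuous_on_subset[OF H2]]) (use fin xy in auto)
  have mid: "2 * g m \<le> g (m - h) + g (m + h)" if "0 \<le> h" "x \<le> m - h" "m + h \<le> y" for m h
  proof -
    have "w m + w ((m - h) + (m + h) - m) \<le> w (m - h) + w (m + h)"
      by (rule Jn_uv[OF J]) (use that xy in auto)
    then have "ereal (g m) + ereal (g m) \<le> ereal (g (m - h)) + ereal (g (m + h))"
      using ws that by simp
    then show ?thesis by simp
  qed
  define z where "z = (1 - t) * x + t * y"
  have e1: "z - x = t * (y - x)" by (simp add: z_def algebra_simps)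
  have e2: "y - z = (1 - t) * (y - x)" by (simp add: z_def algebra_simps)
  have p1: "0 \<le> t * (y - x)" using xy t by auto
  have p2: "0 \<le> (1 - t) * (y - x)" using xy t by auto
  have "x \<le> z" using e1 p1 by linarith
  moreover have "z \<le> y" using e2 p2 by linarith
  ultimately have z: "z \<in> {x..y}" by simp
  have "g z \<le> g x + (z - x) / (y - x) * (g y - g x)" by (rule midpoint_chord[OF xy(2) cg mid z]) auto
  moreover have "(z - x) / (y - x) = t" unfolding z_def using xy by (simp add: field_simps)
  ultimately have "g z \<le> (1 - t) * g x + t * g y" by (simp add: algebra_simps)
  then show ?thesis using ws z xy by (simp add: z_def[symmetric])
qed

lemma rhs_inf:
  fixes a b :: ereal and t :: real
  assumes "0 < t" "t < 1" "a \<noteq> -\<infinity>" "b \<noteq> -\<infinity>" "a = \<infinity> \<or> b = \<infinity>"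
  shows "ereal (1 - t) * a + ereal t * b = \<infinity>"
  using assms by (cases a; cases b) auto

lemma conv_of_Jn:
  assumes H1: "\<forall>z\<in>{0..L}. w z \<noteq> -\<infinity>" and H2: "continuous_on {0..L} w" and J: "Jn w L"
  shows "ereal_convex_on {0..L} w"
  unfolding ereal_convex_on_def
proof (intro conjI ballI allI impI)
  show "convex {0..L}" by simp
  fix x y t :: real assume x: "x \<in> {0..L}" and y: "y \<in> {0..L}" and t: "0 < t \<and> t < 1"
  show "w ((1 - t) * x + t * y) \<le> ereal (1 - t) * w x + ereal t * w y"
  proof (cases "w x = \<infinity> \<or> w y = \<infinity>")
    case True
    then show ?thesis using rhs_inf[of t "w x" "w y"] t x y H1 by auto
  next
    case False
    then have fx: "w x \<noteq> \<infinity>" "w y \<noteq> \<infinity>" by auto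
    consider "x < y" | "x = y" | "y < x" by linarith
    then show ?thesis
    proof cases
      case 1
      then show ?thesis using conv_aux[OF H1 H2 J _ 1 _ fx] x y t by auto
    next
      case 2
      obtain X where X: "w x = ereal X" using fx H1 x by (cases "w x") auto
      have "(1 - t) * x + t * x = x" by (simp add: algebra_simps)
      moreover have "ereal (1 - t) * ereal X + ereal t * ereal X = ereal X" by (simp add: algebra_simps)
      ultimately show ?thesis using 2 X by simp
    next
      case 3
      have h: "w ((1 - (1 - t)) * y + (1 - t) * x) \<le> ereal (1 - (1 - t)) * w y + ereal (1 - t) * w x"
        by (rule conv_aux[OF H1 H2 J _ 3 _ fx(2,1)]) (use x y t in auto)
      then have h2: "w (t * y + (1 - t) * x) \<le> ereal t * w y + ereal (1 - t) * w x" by simp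
      have eq1: "t * y + (1 - t) * x = (1 - t) * x + t * y" by (rule add.commute)
      have eq2: "ereal t * w y + ereal (1 - t) * w x = ereal (1 - t) * w x + ereal t * w y" by (rule add.commute)
      show ?thesis using h2 by (simp only: eq1 eq2)
    qed
  qed
qed

lemma Jn_of_conv:
  assumes H1: "\<forall>z\<in>{0..L}. w z \<noteq> -\<infinity>" and C: "ereal_convex_on {0..L} w"
  shows "Jn w L"
  unfolding Jn_def
proof (intro allI impI)
  fix p q r :: real assume pqr: "0 \<le> p \<and> 0 \<le> q \<and> 0 \<le> r \<and> p + q + r \<le> L"
  show "w (p + q) + w (q + r) \<le> w q + w (p + q + r)"
  proof (cases "w q = \<infinity> \<or> w (p + q + r) = \<infinity>")
    case True
    have "w q \<noteq> -\<infinity>" "w (p + q + r) \<noteq> -\<infinity>" using H1 pqr by auto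
    then have "w q + w (p + q + r) = \<infinity>" using True by auto
    then show ?thesis by (metis ereal_less_eq(1))
  next
    case False
    obtain U where U: "w q = ereal U" using False H1 pqr by (cases "w q") auto
    obtain V where V: "w (p + q + r) = ereal V" using False H1 pqr by (cases "w (p + q + r)") auto
    consider "p = 0" | "r = 0" | "0 < p \<and> 0 < r" using pqr by linarith
    then show ?thesis
    proof cases
      case 1 then show ?thesis by simp
    next
      case 2 then show ?thesis by (simp add: add.commute)
    next
      case 3
      define t where "t = p / (p + r)"
      have t: "0 < t" "t < 1" unfolding t_def using 3 by (auto simp: field_simps)
      have tp: "t * (p + r) = p" unfolding t_def using 3 by simp
      have "(1 - t) * q + t * (p + q + r) = q + t * (p + r)" by (simp add: algebra_simps)
      then have e1: "(1 - t) * q + t * (p + q + r) = p + q" using tp by simp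
      have "(1 - (1 - t)) * q + (1 - t) * (p + q + r) = q + (p + r) - t * (p + r)" by (simp add: algebra_simps)
      then have e2: "(1 - (1 - t)) * q + (1 - t) * (p + q + r) = q + r" using tp by simp
      have q1: "q \<in> {0..L}" "p + q + r \<in> {0..L}" using pqr by auto
      have c1: "w (p + q) \<le> ereal (1 - t) * w q + ereal t * w (p + q + r)"
        using C[unfolded ereal_convex_on_def, THEN conjunct2, rule_format, of q "p + q + r" t] q1 t
        by (simp only: e1)
      have c2: "w (q + r) \<le> ereal (1 - (1 - t)) * w q + ereal (1 - t) * w (p + q + r)"
        using C[unfolded ereal_convex_on_def, THEN conjunct2, rule_format, of q "p + q + r" "1 - t"] q1 t
        by (simp only: e2) (use t in simp)
      have "w (p + q) + w (q + r) \<le> (ereal (1 - t) * w q + ereal t * w (p + q + r)) +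
             (ereal (1 - (1 - t)) * w q + ereal (1 - t) * w (p + q + r))"
        by (rule add_mono[OF c1 c2])
      also have "\<dots> = ereal ((1 - t) * U + t * V + ((1 - (1 - t)) * U + (1 - t) * V))" using U V by simp
      also have "\<dots> = w q + w (p + q + r)" using U V by (simp add: algebra_simps)
      finally show ?thesis .
    qed
  qed
qed

definition Jb :: "(real \<Rightarrow> ereal) \<Rightarrow> real \<Rightarrow> bool" where
 "Jb w L \<longleftrightarrow> (\<forall>p q r. 0 \<le> p \<and> 0 \<le> q \<and> 0 \<le> r \<and> p + q + r \<le> L \<longrightarrow> w (p + q) + w (q + r) \<le> w p + w r)"

definition ii :: "(real \<Rightarrow> ereal) \<Rightarrow> real \<Rightarrow> bool" where
 "ii w L \<longleftrightarrow> (\<forall>d0 d1 \<delta>. 0 < d0 \<and> 0 < d1 \<and> 0 < \<delta> \<and> d0 + d1 + \<delta> \<le> L \<longrightarrow>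
               w (d0 + \<delta>) + w (d1 + \<delta>) \<le> w d1 + w d0)"

definition sii :: "(real \<Rightarrow> ereal) \<Rightarrow> real \<Rightarrow> bool" where
 "sii w L \<longleftrightarrow> (\<forall>d0 d1 \<delta>. 0 < d0 \<and> 0 < d1 \<and> 0 < \<delta> \<and> d0 + d1 + \<delta> \<le> L
                \<and> w (d0 + \<delta>) + w (d1 + \<delta>) \<noteq> \<infinity> \<longrightarrow>
               w (d0 + \<delta>) + w (d1 + \<delta>) < w d1 + w d0)"

lemma Jb_ii: "Jb w L \<Longrightarrow> ii w L"
  unfolding Jb_def ii_def
proof (intro allI impI)
  fix d0 d1 \<delta> :: real
  assume J: "\<forall>p q r. 0 \<le> p \<and> 0 \<le> q \<and> 0 \<le> r \<and> p + q + r \<le> L \<longrightarrow> w (p + q) + w (q + r) \<le> w p + w r"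
    and d: "0 < d0 \<and> 0 < d1 \<and> 0 < \<delta> \<and> d0 + d1 + \<delta> \<le> L"
  have "w (d0 + \<delta>) + w (\<delta> + d1) \<le> w d0 + w d1" using J[rule_format, of d0 \<delta> d1] d by (auto simp: algebra_simps)
  then show "w (d0 + \<delta>) + w (d1 + \<delta>) \<le> w d1 + w d0" by (simp add: add.commute)
qed

lemma cont_shift:
  fixes w :: "real \<Rightarrow> ereal" and c s lo hi L :: real
  assumes H2: "continuous_on {0..L} w" and "\<And>e. e \<in> {lo..hi} \<Longrightarrow> c + s * e \<in> {0..L}"
  shows "continuous_on {lo..hi} (\<lambda>e. w (c + s * e))"
  apply (rule continuous_on_compose2[OF H2])
   apply (intro continuous_on_add continuous_on_const continuous_on_mult_left continuous_on_id)
  using assms(2) by auto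

lemma ii_Jb:
  assumes H1: "\<forall>z\<in>{0..L}. w z \<noteq> -\<infinity>" and H2: "continuous_on {0..L} w" and I: "ii w L"
  shows "Jb w L"
  unfolding Jb_def
proof (intro allI impI)
  fix p q r :: real assume pqr: "0 \<le> p \<and> 0 \<le> q \<and> 0 \<le> r \<and> p + q + r \<le> L"
  show "w (p + q) + w (q + r) \<le> w p + w r"
  proof (cases "q = 0")
    case True then show ?thesis by simp
  next
    case False
    then have q: "0 < q" using pqr by auto
    define c where "c = q / 4"
    have c: "0 < c" "c < q / 2" unfolding c_def using q by auto
    have c1: "continuous_on {0..c} (\<lambda>e. w ((p + q) + (-1) * e))"
      by (rule cont_shift[OF H2]) (use c pqr in auto)
    have c2: "continuous_on {0..c} (\<lambda>e. w ((q + r) + (-1) * e))"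
      by (rule cont_shift[OF H2]) (use c pqr in auto)
    have c3: "continuous_on {0..c} (\<lambda>e. w (p + 1 * e))"
      by (rule cont_shift[OF H2]) (use c pqr in auto)
    have c4: "continuous_on {0..c} (\<lambda>e. w (r + 1 * e))"
      by (rule cont_shift[OF H2]) (use c pqr in auto)
    have "(\<lambda>e. w ((p + q) + (-1) * e) + w ((q + r) + (-1) * e)) 0 \<le> (\<lambda>e. w (p + 1 * e) + w (r + 1 * e)) 0"
    proof (rule limle_left[OF c(1)])
      show "continuous_on {0..c} (\<lambda>e. w ((p + q) + (-1) * e) + w ((q + r) + (-1) * e))"
        by (rule continuous_on_add_ereal[OF c1 c2]) (use H1 c pqr in auto)
      show "continuous_on {0..c} (\<lambda>e. w (p + 1 * e) + w (r + 1 * e))"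
        by (rule continuous_on_add_ereal[OF c3 c4]) (use H1 c pqr in auto)
      fix e assume e: "0 < e" "e \<le> c"
      have "w ((p + e) + (q - 2 * e)) + w ((r + e) + (q - 2 * e)) \<le> w (r + e) + w (p + e)"
        using I[unfolded ii_def, rule_format, of "p + e" "r + e" "q - 2 * e"] e c pqr by auto
      moreover have "(p + e) + (q - 2 * e) = (p + q) + (-1) * e" "(r + e) + (q - 2 * e) = (q + r) + (-1) * e" by auto
      ultimately show "w ((p + q) + (-1) * e) + w ((q + r) + (-1) * e) \<le> w (p + 1 * e) + w (r + 1 * e)"
        by (simp add: add.commute)
    qed
    then show ?thesis by simp
  qed
qed

lemma sii_ii:
  assumes H1: "\<forall>z\<in>{0..L}. w z \<noteq> -\<infinity>" and H2: "continuous_on {0..L} w" and S: "sii w L"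
  shows "ii w L"
  unfolding ii_def
proof (intro allI impI)
  fix d0 d1 \<delta> :: real assume d: "0 < d0 \<and> 0 < d1 \<and> 0 < \<delta> \<and> d0 + d1 + \<delta> \<le> L"
  show "w (d0 + \<delta>) + w (d1 + \<delta>) \<le> w d1 + w d0"
  proof (cases "w d1 + w d0 = \<infinity>")
    case True then show ?thesis by (metis ereal_less_eq(1))
  next
    case Bf: False
    define \<phi> where "\<phi> t = w (d0 + 1 * t) + w (d1 + 1 * t)" for t
    have cphi: "continuous_on {0..\<delta>} \<phi>" unfolding \<phi>_def
      by (rule continuous_on_add_ereal[OF cont_shift[OF H2] cont_shift[OF H2]]) (use H1 d in auto)
    have strict: "\<phi> t < w d1 + w d0" if "0 < t" "t \<le> \<delta>" "\<phi> t \<noteq> \<infinity>" for t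
      using S[unfolded sii_def, rule_format, of d0 d1 t] that d unfolding \<phi>_def by auto
    define T where "T = {0..\<delta>} \<inter> \<phi> -` {\<infinity>}"
    show ?thesis
    proof (cases "T = {}")
      case True
      have "\<delta> \<in> {0..\<delta>}" using d by auto
      then have "\<phi> \<delta> \<noteq> \<infinity>" using True unfolding T_def by blast
      then show ?thesis using strict[of \<delta>] d unfolding \<phi>_def by auto
    next
      case False
      have Tc: "closed T" unfolding T_def by (rule continuous_closed_preimage[OF cphi]) auto
      have Tb: "bdd_below T" unfolding T_def by (rule bdd_belowI[of _ 0]) auto
      define s where "s = Inf T"
      have sT: "s \<in> T" using closed_contains_Inf[OF False Tb Tc] s_def by simp
      have phi0: "\<phi> 0 = w d1 + w d0" unfolding \<phi>_def by (simp add: add.commute)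
      have s0: "s \<noteq> 0" using sT phi0 Bf unfolding T_def by auto
      have s1: "0 < s" "s \<le> \<delta>" "\<phi> s = \<infinity>" using sT s0 unfolding T_def by auto
      have "\<phi> s \<le> (\<lambda>_. w d1 + w d0) s"
      proof (rule limle_right[of "s / 2" s])
        show "s / 2 < s" using s1 by auto
        show "continuous_on {s / 2..s} \<phi>" by (rule continuous_on_subset[OF cphi]) (use s1 in auto)
        show "continuous_on {s / 2..s} (\<lambda>_. w d1 + w d0)" by simp
        fix t assume t: "s / 2 \<le> t" "t < s"
        have "t \<notin> T"
        proof
          assume "t \<in> T"
          then have "s \<le> t" unfolding s_def using Tb by (rule cInf_lower)
          then show False using t by auto
        qed
        then have "\<phi> t \<noteq> \<infinity>" unfolding T_def using t s1 by auto
        then show "\<phi> t \<le> w d1 + w d0" using strict[of t] t s1 by auto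
      qed
      then show ?thesis using s1 Bf by simp
    qed
  qed
qed

lemma real_sc:
  fixes g :: "real \<Rightarrow> real"
  assumes xy: "x < y"
    and conv: "\<And>a b m. a \<in> {x..y} \<Longrightarrow> b \<in> {x..y} \<Longrightarrow> 0 < m \<Longrightarrow> m < 1 \<Longrightarrow>
                 g ((1 - m) * a + m * b) \<le> (1 - m) * g a + m * g b"
    and sj: "\<And>s. x < s \<Longrightarrow> s < y \<Longrightarrow> g s + g (x + y - s) < g x + g y"
    and t: "0 < t" "t < 1"
  shows "g ((1 - t) * x + t * y) < (1 - t) * g x + t * g y"
proof (rule ccontr)
  assume neg: "\<not> ?thesis"
  define z where "z = (1 - t) * x + t * y"
  define z' where "z' = x + y - z"
  define c where "c = (g y - g x) / (y - x)"
  define l where "l s = g x + (s - x) * c" for s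
  have zx: "z - x = t * (y - x)" unfolding z_def by (simp add: algebra_simps)
  have yz: "y - z = (1 - t) * (y - x)" unfolding z_def by (simp add: algebra_simps)
  have p1: "0 < t * (y - x)" using xy t by simp
  have p2: "0 < (1 - t) * (y - x)" using xy t by simp
  have z1: "x < z" using zx p1 by linarith
  have z2: "z < y" using yz p2 by linarith
  note z = z1 z2
  have z': "x < z'" "z' < y" using z unfolding z'_def by auto
  have cy: "(y - x) * c = g y - g x" unfolding c_def using xy by simp
  have lx: "l x = g x" and ly: "l y = g y" unfolding l_def using cy by auto
  have lz: "l z = (1 - t) * g x + t * g y"
  proof -
    have "l z = g x + t * ((y - x) * c)" unfolding l_def zx by (simp add: algebra_simps)
    then have "l z = g x + t * (g y - g x)" by (simp only: cy)
    then show ?thesis by (simp add: algebra_simps)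
  qed
  have hz: "l z \<le> g z" using neg lz z_def by simp
  have aff: "(1 - m) * l a + m * l b = l ((1 - m) * a + m * b)" for m a b
    unfolding l_def by (simp add: algebra_simps)
  have "l z + l z' = g x + g y"
  proof -
    have "l z + l z' = 2 * g x + (y - x) * c" unfolding l_def z'_def by (simp add: algebra_simps)
    then show ?thesis using cy by simp
  qed
  moreover have "g z + g z' < g x + g y" using sj[OF z] z'_def by simp
  ultimately have hz': "g z' < l z'" using hz by simp
  consider "z' < z" | "z < z'" | "z = z'" by linarith
  then show False
  proof cases
    case 1
    define m where "m = (z - z') / (y - z')"
    have m: "0 < m" "m < 1" unfolding m_def using 1 z z' by (auto simp: field_simps)
    have "m * (y - z') = z - z'" unfolding m_def using z' by simp
    then have e: "(1 - m) * z' + m * y = z" by (simp add: algebra_simps)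
    have "g z \<le> (1 - m) * g z' + m * g y" using conv[of z' y m] m z' xy e by auto
    also have "\<dots> < (1 - m) * l z' + m * l y" using hz' m ly by simp
    also have "\<dots> = l z" using aff e by simp
    finally show False using hz by simp
  next
    case 2
    define m where "m = (z - x) / (z' - x)"
    have m: "0 < m" "m < 1" unfolding m_def using 2 z z' by (auto simp: field_simps)
    have "m * (z' - x) = z - x" unfolding m_def using z' by simp
    then have e: "(1 - m) * x + m * z' = z" by (simp add: algebra_simps)
    have "g z \<le> (1 - m) * g x + m * g z'" using conv[of x z' m] m z' xy e by auto
    also have "\<dots> < (1 - m) * l x + m * l z'" using hz' m lx by simp
    also have "\<dots> = l z" using aff e by simp
    finally show False using hz by simp
  next
    case 3
    then show False using hz hz' by simp
  qed
qed

definition SJn :: "(real \<Rightarrow> ereal) \<Rightarrow> real \<Rightarrow> bool" where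
 "SJn w L \<longleftrightarrow> (\<forall>p q r. 0 \<le> p \<and> 0 \<le> q \<and> 0 \<le> r \<and> p + q + r \<le> L \<and> 0 < p \<and> 0 < r
     \<and> w (p + q) + w (q + r) \<noteq> \<infinity> \<longrightarrow> w (p + q) + w (q + r) < w q + w (p + q + r))"

lemma Icc_comb:
  fixes a b x y m :: real
  assumes "a \<in> {x..y}" "b \<in> {x..y}" "0 \<le> m" "m \<le> 1"
  shows "(1 - m) * a + m * b \<in> {x..y}"
  using convexD[OF convex_real_interval(5)[of x y] assms(1,2), of "1 - m" m] assms(3,4) by simp

lemma sc_aux:
  assumes H1: "\<forall>z\<in>{0..L}. w z \<noteq> -\<infinity>" and H2: "continuous_on {0..L} w" and J: "Jn w L"
    and SJ: "SJn w L"
    and xy: "0 \<le> x" "x < y" "y \<le> L" and fx: "w x \<noteq> \<infinity>" "w y \<noteq> \<infinity>" and t: "0 < t" "t < 1"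
  shows "w ((1 - t) * x + t * y) < ereal (1 - t) * w x + ereal t * w y"
proof -
  have C: "ereal_convex_on {0..L} w" by (rule conv_of_Jn[OF H1 H2 J])
  have fin: "\<bar>w s\<bar> \<noteq> \<infinity>" if "s \<in> {x..y}" for s using Jn_finite[OF J H1 xy(1) _ _ xy(3) fx] that by auto
  define g where "g s = real_of_ereal (w s)" for s
  have ws: "w s = ereal (g s)" if "s \<in> {x..y}" for s using fin[OF that] unfolding g_def by (simp add: ereal_real)
  have conv: "g ((1 - m) * a + m * b) \<le> (1 - m) * g a + m * g b"
    if ab: "a \<in> {x..y}" "b \<in> {x..y}" "0 < m" "m < 1" for a b m
  proof -
    have "w ((1 - m) * a + m * b) \<le> ereal (1 - m) * w a + ereal m * w b"
      using C[unfolded ereal_convex_on_def, THEN conjunct2, rule_format, of a b m] ab xy by auto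
    moreover have "(1 - m) * a + m * b \<in> {x..y}" using Icc_comb ab by auto
    ultimately show ?thesis using ws ab by simp
  qed
  have sj: "g s + g (x + y - s) < g x + g y" if s: "x < s" "s < y" for s
  proof -
    have A: "w ((s - x) + x) + w (x + (y - s)) \<noteq> \<infinity>" using fin[of s] fin[of "x + y - s"] s
      by (simp add: algebra_simps) (metis PInfty_neq_ereal(1) abs_ereal.simps(3) ereal_plus_eq_PInfty order.strict_implies_order)
    have "w ((s - x) + x) + w (x + (y - s)) < w x + w ((s - x) + x + (y - s))"
      using SJ[unfolded SJn_def, rule_format, of "s - x" x "y - s"] s xy A by auto
    then have "w s + w (x + y - s) < w x + w y" by (simp add: algebra_simps)
    then show ?thesis using ws s by simp
  qed
  have "g ((1 - t) * x + t * y) < (1 - t) * g x + t * g y" by (rule real_sc[OF xy(2) conv sj t])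
  moreover have "(1 - t) * x + t * y \<in> {x..y}" using Icc_comb[of x x y y t] xy t by auto
  ultimately show ?thesis using ws xy by simp
qed

lemma sc_of:
  assumes H1: "\<forall>z\<in>{0..L}. w z \<noteq> -\<infinity>" and H2: "continuous_on {0..L} w" and J: "Jn w L"
    and SJ: "SJn w L"
  shows "ereal_strictly_convex_on {0..L} w"
  unfolding ereal_strictly_convex_on_def
proof (intro conjI ballI allI impI)
  show "ereal_convex_on {0..L} w" by (rule conv_of_Jn[OF H1 H2 J])
  fix x y t :: real assume x: "x \<in> {0..L}" and y: "y \<in> {0..L}"
    and h: "x \<noteq> y \<and> 0 < t \<and> t < 1 \<and> w ((1 - t) * x + t * y) \<noteq> \<infinity>"
  show "w ((1 - t) * x + t * y) < ereal (1 - t) * w x + ereal t * w y"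
  proof (cases "w x = \<infinity> \<or> w y = \<infinity>")
    case True
    then have "ereal (1 - t) * w x + ereal t * w y = \<infinity>" using rhs_inf[of t "w x" "w y"] h x y H1 by auto
    then show ?thesis using h by (cases "w ((1 - t) * x + t * y)") auto
  next
    case False
    then have fx: "w x \<noteq> \<infinity>" "w y \<noteq> \<infinity>" by auto
    consider "x < y" | "y < x" using h by linarith
    then show ?thesis
    proof cases
      case 1
      then show ?thesis using sc_aux[OF H1 H2 J SJ _ 1 _ fx] x y h by auto
    next
      case 3: 2
      have hh: "w ((1 - (1 - t)) * y + (1 - t) * x) < ereal (1 - (1 - t)) * w y + ereal (1 - t) * w x"
        by (rule sc_aux[OF H1 H2 J SJ _ 3 _ fx(2,1)]) (use x y h in auto)
      then have h2: "w (t * y + (1 - t) * x) < ereal t * w y + ereal (1 - t) * w x" by simp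
      have eq1: "t * y + (1 - t) * x = (1 - t) * x + t * y" by (rule add.commute)
      have eq2: "ereal t * w y + ereal (1 - t) * w x = ereal (1 - t) * w x + ereal t * w y" by (rule add.commute)
      show ?thesis using h2 by (simp only: eq1 eq2)
    qed
  qed
qed

lemma SJn_of_sc:
  assumes H1: "\<forall>z\<in>{0..L}. w z \<noteq> -\<infinity>" and SC: "ereal_strictly_convex_on {0..L} w"
  shows "SJn w L"
  unfolding SJn_def
proof (intro allI impI)
  fix p q r :: real
  assume pqr: "0 \<le> p \<and> 0 \<le> q \<and> 0 \<le> r \<and> p + q + r \<le> L \<and> 0 < p \<and> 0 < r \<and> w (p + q) + w (q + r) \<noteq> \<infinity>"
  have C: "ereal_convex_on {0..L} w" using SC unfolding ereal_strictly_convex_on_def by auto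
  have nm: "w (p + q) \<noteq> -\<infinity>" "w (q + r) \<noteq> -\<infinity>" using H1 pqr by auto
  have Af: "w (p + q) \<noteq> \<infinity>" "w (q + r) \<noteq> \<infinity>" using pqr nm by auto
  obtain P where P: "w (p + q) = ereal P" using Af nm by (cases "w (p + q)") auto
  obtain Q where Q: "w (q + r) = ereal Q" using Af nm by (cases "w (q + r)") auto
  show "w (p + q) + w (q + r) < w q + w (p + q + r)"
  proof (cases "w q = \<infinity> \<or> w (p + q + r) = \<infinity>")
    case True
    have "w q \<noteq> -\<infinity>" "w (p + q + r) \<noteq> -\<infinity>" using H1 pqr by auto
    then have inf: "w q + w (p + q + r) = \<infinity>" using True by auto
    show ?thesis unfolding inf using P Q by simp
  next
    case False
    obtain U where U: "w q = ereal U" using False H1 pqr by (cases "w q") auto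
    obtain V where V: "w (p + q + r) = ereal V" using False H1 pqr by (cases "w (p + q + r)") auto
    define t where "t = p / (p + r)"
    have t: "0 < t" "t < 1" unfolding t_def using pqr by (auto simp: field_simps)
    have tp: "t * (p + r) = p" unfolding t_def using pqr by simp
    have "(1 - t) * q + t * (p + q + r) = q + t * (p + r)" by (simp add: algebra_simps)
    then have e1: "(1 - t) * q + t * (p + q + r) = p + q" using tp by simp
    have "(1 - (1 - t)) * q + (1 - t) * (p + q + r) = q + (p + r) - t * (p + r)" by (simp add: algebra_simps)
    then have e2: "(1 - (1 - t)) * q + (1 - t) * (p + q + r) = q + r" using tp by simp
    have q1: "q \<in> {0..L}" "p + q + r \<in> {0..L}" using pqr by auto
    have qne: "q \<noteq> p + q + r" using pqr by auto
    have c1: "w (p + q) < ereal (1 - t) * w q + ereal t * w (p + q + r)"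
      using SC[unfolded ereal_strictly_convex_on_def, THEN conjunct2, rule_format, of q "p + q + r" t] q1 t qne Af
      by (simp only: e1) simp
    have c2: "w (q + r) \<le> ereal (1 - (1 - t)) * w q + ereal (1 - t) * w (p + q + r)"
      using C[unfolded ereal_convex_on_def, THEN conjunct2, rule_format, of q "p + q + r" "1 - t"] q1 t
      by (simp only: e2) (use t in simp)
    have "P < (1 - t) * U + t * V" using c1 P U V by simp
    moreover have "Q \<le> (1 - (1 - t)) * U + (1 - t) * V" using c2 Q U V by simp
    ultimately have "P + Q < U + V" by (simp add: algebra_simps)
    then show ?thesis using P Q U V by simp
  qed
qed

lemma sii_of_SJb_aux:
  assumes "\<forall>p q r. 0 \<le> p \<and> 0 \<le> q \<and> 0 \<le> r \<and> p + q + r \<le> L \<and> 0 < q \<and> w (p + q) + w (q + r) \<noteq> \<infinity>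
      \<longrightarrow> w (p + q) + w (q + r) < w p + w r"
  shows "sii w L"
  unfolding sii_def
proof (intro allI impI)
  fix d0 d1 \<delta> :: real
  assume d: "0 < d0 \<and> 0 < d1 \<and> 0 < \<delta> \<and> d0 + d1 + \<delta> \<le> L \<and> w (d0 + \<delta>) + w (d1 + \<delta>) \<noteq> \<infinity>"
  have "w (d0 + \<delta>) + w (\<delta> + d1) < w d0 + w d1"
    using assms[rule_format, of d0 \<delta> d1] d by (auto simp: algebra_simps)
  then show "w (d0 + \<delta>) + w (d1 + \<delta>) < w d1 + w d0" by (simp add: add.commute)
qed

lemma K_lemma:
  assumes H1: "\<forall>z\<in>{0..L}. w z \<noteq> -\<infinity>" and H2: "continuous_on {0..L} w"
    and C: "ereal_convex_on {0..L} w" and S: "sii w L"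
    and q: "0 < q" and r: "0 \<le> r" and qr: "q + r \<le> L"
    and f0: "w 0 \<noteq> \<infinity>" and fr: "w r \<noteq> \<infinity>" and fA: "w q + w (q + r) \<noteq> \<infinity>"
  shows "w q + w (q + r) < w 0 + w r"
proof -
  define M where "M = q + r"
  have M: "0 < M" "M \<le> L" using q r qr M_def by auto
  have fM: "w M \<noteq> \<infinity>" using fA H1 q r qr unfolding M_def by auto
  have J: "Jn w L" by (rule Jn_of_conv[OF H1 C])
  have fin: "\<bar>w s\<bar> \<noteq> \<infinity>" if "s \<in> {0..M}" for s
    using Jn_finite[OF J H1 _ _ _ M(2) f0 fM] that by auto
  define g where "g s = real_of_ereal (w s)" for s
  have ws: "w s = ereal (g s)" if "s \<in> {0..M}" for s using fin[OF that] unfolding g_def by (simp add: ereal_real)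
  have cg: "continuous_on {0..M} g" unfolding g_def
    by (rule continuous_on_real_of_ereal[OF continuous_on_subset[OF H2]]) (use fin M in auto)
  define k where "k s = g s - g (M - s)" for s
  have cg2: "continuous_on {0..M} (\<lambda>s. g (M - s))"
    by (rule continuous_on_compose2[OF cg]) (auto intro!: continuous_intros)
  have ck: "continuous_on {0..M} k" unfolding k_def by (intro continuous_on_diff cg cg2)
  have dec: "k v < k u" if uv: "0 < u" "u < v" "v < M" for u v
  proof -
    have "w (u + (v - u)) + w ((M - v) + (v - u)) < w (M - v) + w u"
    proof (rule S[unfolded sii_def, rule_format])
      have "w v + w (M - u) \<noteq> \<infinity>" using ws[of v] ws[of "M - u"] uv by simp
      then show "0 < u \<and> 0 < M - v \<and> 0 < v - u \<and> u + (M - v) + (v - u) \<le> L \<and>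
                 w (u + (v - u)) + w ((M - v) + (v - u)) \<noteq> \<infinity>" using uv M by simp
    qed
    then have "w v + w (M - u) < w (M - v) + w u" by simp
    then have "g v + g (M - u) < g (M - v) + g u" using ws[of v] ws[of "M - u"] ws[of "M - v"] ws[of u] uv by simp
    then show ?thesis unfolding k_def by simp
  qed
  define q1 where "q1 = q / 3"
  define q2 where "q2 = 2 * q / 3"
  have qq: "0 < q1" "q1 < q2" "q2 < q" "q \<le> M" unfolding q1_def q2_def M_def using q r by auto
  have a1: "(\<lambda>_. k q1) 0 \<le> k 0"
  proof (rule limle_left[OF qq(1)])
    show "continuous_on {0..q1} (\<lambda>_. k q1)" by simp
    show "continuous_on {0..q1} k" by (rule continuous_on_subset[OF ck]) (use qq in auto)
    fix s assume "0 < s" "s \<le> q1"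
    then show "k q1 \<le> k s" using dec[of s q1] qq by (cases "s = q1") auto
  qed
  have a2: "k q2 < k q1" using dec[of q1 q2] qq by auto
  have a3: "k q \<le> (\<lambda>_. k q2) q"
  proof (rule limle_right[OF qq(3)])
    show "continuous_on {q2..q} (\<lambda>_. k q2)" by simp
    show "continuous_on {q2..q} k" by (rule continuous_on_subset[OF ck]) (use qq in auto)
    fix s assume "q2 \<le> s" "s < q"
    then show "k s \<le> k q2" using dec[of q2 s] qq by (cases "s = q2") auto
  qed
  have "k q < k 0" using a1 a2 a3 by simp
  then have "g q + g M < g 0 + g r" unfolding k_def M_def by simp
  then show ?thesis using ws[of q] ws[of M] ws[of 0] ws[of r] q r unfolding M_def by simp
qed

definition SJb :: "(real \<Rightarrow> ereal) \<Rightarrow> real \<Rightarrow> bool" where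
 "SJb w L \<longleftrightarrow> (\<forall>p q r. 0 \<le> p \<and> 0 \<le> q \<and> 0 \<le> r \<and> p + q + r \<le> L \<and> 0 < q \<and> w (p + q) + w (q + r) \<noteq> \<infinity>
      \<longrightarrow> w (p + q) + w (q + r) < w p + w r)"

lemma SJb_sii: "SJb w L \<Longrightarrow> sii w L"
  unfolding SJb_def by (rule sii_of_SJb_aux)

lemma sii_SJb:
  assumes H1: "\<forall>z\<in>{0..L}. w z \<noteq> -\<infinity>" and H2: "continuous_on {0..L} w"
    and C: "ereal_convex_on {0..L} w" and S: "sii w L"
  shows "SJb w L"
  unfolding SJb_def
proof (intro allI impI)
  fix p q r :: real
  assume pqr: "0 \<le> p \<and> 0 \<le> q \<and> 0 \<le> r \<and> p + q + r \<le> L \<and> 0 < q \<and> w (p + q) + w (q + r) \<noteq> \<infinity>"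
  show "w (p + q) + w (q + r) < w p + w r"
  proof (cases "w p + w r = \<infinity>")
    case True
    show ?thesis unfolding True using pqr by (cases "w (p + q) + w (q + r)") auto
  next
    case False
    have nm: "w p \<noteq> -\<infinity>" "w r \<noteq> -\<infinity>" using H1 pqr by auto
    then have fp: "w p \<noteq> \<infinity>" "w r \<noteq> \<infinity>" using False by auto
    consider "p = 0" | "r = 0" | "0 < p \<and> 0 < r" using pqr by linarith
    then show ?thesis
    proof cases
      case 1
      have "w q + w (q + r) < w 0 + w r"
        by (rule K_lemma[OF H1 H2 C S]) (use pqr fp 1 in auto)
      then show ?thesis using 1 by simp
    next
      case 2
      have "w q + w (q + p) < w 0 + w p"
        by (rule K_lemma[OF H1 H2 C S]) (use pqr fp 2 in \<open>auto simp: add.commute\<close>)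
      then show ?thesis using 2 by (simp add: add.commute)
    next
      case 3
      have "w (p + q) + w (r + q) < w r + w p"
        using S[unfolded sii_def, rule_format, of p r q] pqr 3 by (auto simp: add.commute)
      then show ?thesis by (simp add: add.commute)
    qed
  qed
qed

lemma perm4:
  assumes "\<sigma> permutes {1..4::nat}"
  shows "(\<sigma> 1 = 1 \<and> \<sigma> 2 = 2 \<and> \<sigma> 3 = 3 \<and> \<sigma> 4 = 4) \<or> (\<sigma> 1 = 1 \<and> \<sigma> 2 = 2 \<and> \<sigma> 3 = 4 \<and> \<sigma> 4 = 3) \<or> (\<sigma> 1 = 1 \<and> \<sigma> 2 = 3 \<and> \<sigma> 3 = 2 \<and> \<sigma> 4 = 4) \<or> (\<sigma> 1 = 1 \<and> \<sigma> 2 = 3 \<and> \<sigma> 3 = 4 \<and> \<sigma> 4 = 2) \<or> (\<sigma> 1 = 1 \<and> \<sigma> 2 = 4 \<and> \<sigma> 3 = 2 \<and> \<sigma> 4 = 3) \<or> (\<sigma> 1 = 1 \<and> \<sigma> 2 = 4 \<and> \<sigma> 3 = 3 \<and> \<sigma> 4 = 2) \<or> (\<sigma> 1 = 2 \<and> \<sigma> 2 = 1 \<and> \<sigma> 3 = 3 \<and> \<sigma> 4 = 4) \<or> (\<sigma> 1 = 2 \<and> \<sigma> 2 = 1 \<and> \<sigma> 3 = 4 \<and> \<sigma> 4 = 3) \<or> (\<sigma> 1 = 2 \<and> \<sigma> 2 = 3 \<and> \<sigma> 3 = 1 \<and> \<sigma> 4 = 4) \<or> (\<sigma> 1 = 2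 \<and> \<sigma> 2 = 3 \<and> \<sigma> 3 = 4 \<and> \<sigma> 4 = 1) \<or> (\<sigma> 1 = 2 \<and> \<sigma> 2 = 4 \<and> \<sigma> 3 = 1 \<and> \<sigma> 4 = 3) \<or> (\<sigma> 1 = 2 \<and> \<sigma> 2 = 4 \<and> \<sigma> 3 = 3 \<and> \<sigma> 4 = 1) \<or> (\<sigma> 1 = 3 \<and> \<sigma> 2 = 1 \<and> \<sigma> 3 = 2 \<and> \<sigma> 4 = 4) \<or> (\<sigma> 1 = 3 \<and> \<sigma> 2 = 1 \<and> \<sigma> 3 = 4 \<and> \<sigma> 4 = 2) \<or> (\<sigma> 1 = 3 \<and> \<sigma> 2 = 2 \<and> \<sigma> 3 = 1 \<and> \<sigma> 4 = 4) \<or> (\<sigma> 1 = 3 \<and> \<sigma> 2 = 2 \<and> \<sigma> 3 = 4 \<and> \<sigma> 4 = 1) \<or> (\<sigma> 1 = 3 \<and> \<sigma> 2 = 4 \<and> \<sigma> 3 = 1 \<and> \<sigma> 4 = 2) \<or> (\<sigma> 1 = 3 \<and> \<sigma> 2 = 4 \<and> \<sigma> 3 = 2 \<and> \<sigma> 4 = 1) \<or> (\<sigma> 1 = 4 \<and> \<sigma> 2 = 1 \<and> \<sigma> 3 = 2 \<and> \<sigma> 4 = 3) \<or> (\<sigma> 1 = 4 \<and> \<sigma> 2 = 1 \<and> \<sigma> 3 = 3 \<and> \<sigma> 4 = 2) \<or> (\<sigma> 1 = 4 \<and> \<sigma> 2 = 2 \<and> \<sigma> 3 = 1 \<and> \<sigma>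 4 = 3) \<or> (\<sigma> 1 = 4 \<and> \<sigma> 2 = 2 \<and> \<sigma> 3 = 3 \<and> \<sigma> 4 = 1) \<or> (\<sigma> 1 = 4 \<and> \<sigma> 2 = 3 \<and> \<sigma> 3 = 1 \<and> \<sigma> 4 = 2) \<or> (\<sigma> 1 = 4 \<and> \<sigma> 2 = 3 \<and> \<sigma> 3 = 2 \<and> \<sigma> 4 = 1)"
proof -
  have v: "\<sigma> i \<in> {1..4}" if "i \<in> {1..4}" for i
    using permutes_in_image[OF assms] that by simp
  have inj: "inj \<sigma>" using permutes_inj[OF assms] .
  have d: "\<sigma> 1 \<noteq> \<sigma> 2" "\<sigma> 1 \<noteq> \<sigma> 3" "\<sigma> 1 \<noteq> \<sigma> 4" "\<sigma> 2 \<noteq> \<sigma> 3" "\<sigma> 2 \<noteq> \<sigma> 4" "\<sigma> 3 \<noteq> \<sigma> 4"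
    using inj by (simp_all add: inj_eq)
  have e: "{1..4::nat} = {1,2,3,4}" by auto
  have h: "\<sigma> 1 = 1 \<or> \<sigma> 1 = 2 \<or> \<sigma> 1 = 3 \<or> \<sigma> 1 = 4" "\<sigma> 2 = 1 \<or> \<sigma> 2 = 2 \<or> \<sigma> 2 = 3 \<or> \<sigma> 2 = 4"
    "\<sigma> 3 = 1 \<or> \<sigma> 3 = 2 \<or> \<sigma> 3 = 3 \<or> \<sigma> 3 = 4" "\<sigma> 4 = 1 \<or> \<sigma> 4 = 2 \<or> \<sigma> 4 = 3 \<or> \<sigma> 4 = 4"
    using v[of 1] v[of 2] v[of 3] v[of 4] unfolding e by simp_all
  from h(1) show ?thesis
  proof (elim disjE)
    assume a1: "\<sigma> 1 = 1"
    from h(2) d a1 have "\<sigma> 2 = 2 \<or> \<sigma> 2 = 3 \<or> \<sigma> 2 = 4" by simp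
    then show ?thesis
    proof (elim disjE)
      assume a2: "\<sigma> 2 = 2"
      from h(3) d a1 a2 have "\<sigma> 3 = 3 \<or> \<sigma> 3 = 4" by simp
      then show ?thesis
      proof (elim disjE)
        assume a3: "\<sigma> 3 = 3"
        from h(4) d a1 a2 a3 have a4: "\<sigma> 4 = 4" by simp
        show ?thesis by (rule disjI1, intro conjI, (fact a1 a2 a3 a4)+)
      next
        assume a3: "\<sigma> 3 = 4"
        from h(4) d a1 a2 a3 have a4: "\<sigma> 4 = 3" by simp
        show ?thesis by (rule disjI2, rule disjI1, intro conjI, (fact a1 a2 a3 a4)+)
      qed
    next
      assume a2: "\<sigma> 2 = 3"
      from h(3) d a1 a2 have "\<sigma> 3 = 2 \<or> \<sigma> 3 = 4" by simp
      then show ?thesis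
      proof (elim disjE)
        assume a3: "\<sigma> 3 = 2"
        from h(4) d a1 a2 a3 have a4: "\<sigma> 4 = 4" by simp
        show ?thesis by (rule disjI2, rule disjI2, rule disjI1, intro conjI, (fact a1 a2 a3 a4)+)
      next
        assume a3: "\<sigma> 3 = 4"
        from h(4) d a1 a2 a3 have a4: "\<sigma> 4 = 2" by simp
        show ?thesis by (rule disjI2, rule disjI2, rule disjI2, rule disjI1, intro conjI, (fact a1 a2 a3 a4)+)
      qed
    next
      assume a2: "\<sigma> 2 = 4"
      from h(3) d a1 a2 have "\<sigma> 3 = 2 \<or> \<sigma> 3 = 3" by simp
      then show ?thesis
      proof (elim disjE)
        assume a3: "\<sigma> 3 = 2"
        from h(4) d a1 a2 a3 have a4: "\<sigma> 4 = 3" by simp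
        show ?thesis by (rule disjI2, rule disjI2, rule disjI2, rule disjI2, rule disjI1, intro conjI, (fact a1 a2 a3 a4)+)
      next
        assume a3: "\<sigma> 3 = 3"
        from h(4) d a1 a2 a3 have a4: "\<sigma> 4 = 2" by simp
        show ?thesis by (rule disjI2, rule disjI2, rule disjI2, rule disjI2, rule disjI2, rule disjI1, intro conjI, (fact a1 a2 a3 a4)+)
      qed
    qed
  next
    assume a1: "\<sigma> 1 = 2"
    from h(2) d a1 have "\<sigma> 2 = 1 \<or> \<sigma> 2 = 3 \<or> \<sigma> 2 = 4" by simp
    then show ?thesis
    proof (elim disjE)
      assume a2: "\<sigma> 2 = 1"
      from h(3) d a1 a2 have "\<sigma> 3 = 3 \<or> \<sigma> 3 = 4" by simp
      then show ?thesis
      proof (elim disjE)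
        assume a3: "\<sigma> 3 = 3"
        from h(4) d a1 a2 a3 have a4: "\<sigma> 4 = 4" by simp
        show ?thesis by (rule disjI2, rule disjI2, rule disjI2, rule disjI2, rule disjI2, rule disjI2, rule disjI1, intro conjI, (fact a1 a2 a3 a4)+)
      next
        assume a3: "\<sigma> 3 = 4"
        from h(4) d a1 a2 a3 have a4: "\<sigma> 4 = 3" by simp
        show ?thesis by (rule disjI2, rule disjI2, rule disjI2, rule disjI2, rule disjI2, rule disjI2, rule disjI2, rule disjI1, intro conjI, (fact a1 a2 a3 a4)+)
      qed
    next
      assume a2: "\<sigma> 2 = 3"
      from h(3) d a1 a2 have "\<sigma> 3 = 1 \<or> \<sigma> 3 = 4" by simp
      then show ?thesis
      proof (elim disjE)
        assume a3: "\<sigma> 3 = 1"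
        from h(4) d a1 a2 a3 have a4: "\<sigma> 4 = 4" by simp
        show ?thesis by (rule disjI2, rule disjI2, rule disjI2, rule disjI2, rule disjI2, rule disjI2, rule disjI2, rule disjI2, rule disjI1, intro conjI, (fact a1 a2 a3 a4)+)
      next
        assume a3: "\<sigma> 3 = 4"
        from h(4) d a1 a2 a3 have a4: "\<sigma> 4 = 1" by simp
        show ?thesis by (rule disjI2, rule disjI2, rule disjI2, rule disjI2, rule disjI2, rule disjI2, rule disjI2, rule disjI2, rule disjI2, rule disjI1, intro conjI, (fact a1 a2 a3 a4)+)
      qed
    next
      assume a2: "\<sigma> 2 = 4"
      from h(3) d a1 a2 have "\<sigma> 3 = 1 \<or> \<sigma> 3 = 3" by simp
      then show ?thesis
      proof (elim disjE)
        assume a3: "\<sigma> 3 = 1"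
        from h(4) d a1 a2 a3 have a4: "\<sigma> 4 = 3" by simp
        show ?thesis by (rule disjI2, rule disjI2, rule disjI2, rule disjI2, rule disjI2, rule disjI2, rule disjI2, rule disjI2, rule disjI2, rule disjI2, rule disjI1, intro conjI, (fact a1 a2 a3 a4)+)
      next
        assume a3: "\<sigma> 3 = 3"
        from h(4) d a1 a2 a3 have a4: "\<sigma> 4 = 1" by simp
        show ?thesis by (rule disjI2, rule disjI2, rule disjI2, rule disjI2, rule disjI2, rule disjI2, rule disjI2, rule disjI2, rule disjI2, rule disjI2, rule disjI2, rule disjI1, intro conjI, (fact a1 a2 a3 a4)+)
      qed
    qed
  next
    assume a1: "\<sigma> 1 = 3"
    from h(2) d a1 have "\<sigma> 2 = 1 \<or> \<sigma> 2 = 2 \<or> \<sigma> 2 = 4" by simp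
    then show ?thesis
    proof (elim disjE)
      assume a2: "\<sigma> 2 = 1"
      from h(3) d a1 a2 have "\<sigma> 3 = 2 \<or> \<sigma> 3 = 4" by simp
      then show ?thesis
      proof (elim disjE)
        assume a3: "\<sigma> 3 = 2"
        from h(4) d a1 a2 a3 have a4: "\<sigma> 4 = 4" by simp
        show ?thesis by (rule disjI2, rule disjI2, rule disjI2, rule disjI2, rule disjI2, rule disjI2, rule disjI2, rule disjI2, rule disjI2, rule disjI2, rule disjI2, rule disjI2, rule disjI1, intro conjI, (fact a1 a2 a3 a4)+)
      next
        assume a3: "\<sigma> 3 = 4"
        from h(4) d a1 a2 a3 have a4: "\<sigma> 4 = 2" by simp
        show ?thesis by (rule disjI2, rule disjI2, rule disjI2, rule disjI2, rule disjI2, rule disjI2, rule disjI2, rule disjI2, rule disjI2, rule disjI2, rule disjI2, rule disjI2, rule disjI2, rule disjI1, intro conjI, (fact a1 a2 a3 a4)+)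
      qed
    next
      assume a2: "\<sigma> 2 = 2"
      from h(3) d a1 a2 have "\<sigma> 3 = 1 \<or> \<sigma> 3 = 4" by simp
      then show ?thesis
      proof (elim disjE)
        assume a3: "\<sigma> 3 = 1"
        from h(4) d a1 a2 a3 have a4: "\<sigma> 4 = 4" by simp
        show ?thesis by (rule disjI2, rule disjI2, rule disjI2, rule disjI2, rule disjI2, rule disjI2, rule disjI2, rule disjI2, rule disjI2, rule disjI2, rule disjI2, rule disjI2, rule disjI2, rule disjI2, rule disjI1, intro conjI, (fact a1 a2 a3 a4)+)
      next
        assume a3: "\<sigma> 3 = 4"
        from h(4) d a1 a2 a3 have a4: "\<sigma> 4 = 1" by simp
        show ?thesis by (rule disjI2, rule disjI2, rule disjI2, rule disjI2, rule disjI2, rule disjI2, rule disjI2, rule disjI2, rule disjI2, rule disjI2, rule disjI2, rule disjI2, rule disjI2, rule disjI2, rule disjI2, rule disjI1, intro conjI, (fact a1 a2 a3 a4)+)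
      qed
    next
      assume a2: "\<sigma> 2 = 4"
      from h(3) d a1 a2 have "\<sigma> 3 = 1 \<or> \<sigma> 3 = 2" by simp
      then show ?thesis
      proof (elim disjE)
        assume a3: "\<sigma> 3 = 1"
        from h(4) d a1 a2 a3 have a4: "\<sigma> 4 = 2" by simp
        show ?thesis by (rule disjI2, rule disjI2, rule disjI2, rule disjI2, rule disjI2, rule disjI2, rule disjI2, rule disjI2, rule disjI2, rule disjI2, rule disjI2, rule disjI2, rule disjI2, rule disjI2, rule disjI2, rule disjI2, rule disjI1, intro conjI, (fact a1 a2 a3 a4)+)
      next
        assume a3: "\<sigma> 3 = 2"
        from h(4) d a1 a2 a3 have a4: "\<sigma> 4 = 1" by simp
        show ?thesis by (rule disjI2, rule disjI2, rule disjI2, rule disjI2, rule disjI2, rule disjI2, rule disjI2, rule disjI2, rule disjI2, rule disjI2, rule disjI2, rule disjI2, rule disjI2, rule disjI2, rule disjI2, rule disjI2, rule disjI2, rule disjI1, intro conjI, (fact a1 a2 a3 a4)+)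
      qed
    qed
  next
    assume a1: "\<sigma> 1 = 4"
    from h(2) d a1 have "\<sigma> 2 = 1 \<or> \<sigma> 2 = 2 \<or> \<sigma> 2 = 3" by simp
    then show ?thesis
    proof (elim disjE)
      assume a2: "\<sigma> 2 = 1"
      from h(3) d a1 a2 have "\<sigma> 3 = 2 \<or> \<sigma> 3 = 3" by simp
      then show ?thesis
      proof (elim disjE)
        assume a3: "\<sigma> 3 = 2"
        from h(4) d a1 a2 a3 have a4: "\<sigma> 4 = 3" by simp
        show ?thesis by (rule disjI2, rule disjI2, rule disjI2, rule disjI2, rule disjI2, rule disjI2, rule disjI2, rule disjI2, rule disjI2, rule disjI2, rule disjI2, rule disjI2, rule disjI2, rule disjI2, rule disjI2, rule disjI2, rule disjI2, rule disjI2, rule disjI1, intro conjI, (fact a1 a2 a3 a4)+)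
      next
        assume a3: "\<sigma> 3 = 3"
        from h(4) d a1 a2 a3 have a4: "\<sigma> 4 = 2" by simp
        show ?thesis by (rule disjI2, rule disjI2, rule disjI2, rule disjI2, rule disjI2, rule disjI2, rule disjI2, rule disjI2, rule disjI2, rule disjI2, rule disjI2, rule disjI2, rule disjI2, rule disjI2, rule disjI2, rule disjI2, rule disjI2, rule disjI2, rule disjI2, rule disjI1, intro conjI, (fact a1 a2 a3 a4)+)
      qed
    next
      assume a2: "\<sigma> 2 = 2"
      from h(3) d a1 a2 have "\<sigma> 3 = 1 \<or> \<sigma> 3 = 3" by simp
      then show ?thesis
      proof (elim disjE)
        assume a3: "\<sigma> 3 = 1"
        from h(4) d a1 a2 a3 have a4: "\<sigma> 4 = 3" by simp
        show ?thesis by (rule disjI2, rule disjI2, rule disjI2, rule disjI2, rule disjI2, rule disjI2, rule disjI2, rule disjI2, rule disjI2, rule disjI2, rule disjI2, rule disjI2, rule disjI2, rule disjI2, rule disjI2, rule disjI2, rule disjI2, rule disjI2, rule disjI2, rule disjI2, rule disjI1, intro conjI, (fact a1 a2 a3 a4)+)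
      next
        assume a3: "\<sigma> 3 = 3"
        from h(4) d a1 a2 a3 have a4: "\<sigma> 4 = 1" by simp
        show ?thesis by (rule disjI2, rule disjI2, rule disjI2, rule disjI2, rule disjI2, rule disjI2, rule disjI2, rule disjI2, rule disjI2, rule disjI2, rule disjI2, rule disjI2, rule disjI2, rule disjI2, rule disjI2, rule disjI2, rule disjI2, rule disjI2, rule disjI2, rule disjI2, rule disjI2, rule disjI1, intro conjI, (fact a1 a2 a3 a4)+)
      qed
    next
      assume a2: "\<sigma> 2 = 3"
      from h(3) d a1 a2 have "\<sigma> 3 = 1 \<or> \<sigma> 3 = 2" by simp
      then show ?thesis
      proof (elim disjE)
        assume a3: "\<sigma> 3 = 1"
        from h(4) d a1 a2 a3 have a4: "\<sigma> 4 = 2" by simp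
        show ?thesis by (rule disjI2, rule disjI2, rule disjI2, rule disjI2, rule disjI2, rule disjI2, rule disjI2, rule disjI2, rule disjI2, rule disjI2, rule disjI2, rule disjI2, rule disjI2, rule disjI2, rule disjI2, rule disjI2, rule disjI2, rule disjI2, rule disjI2, rule disjI2, rule disjI2, rule disjI2, rule disjI1, intro conjI, (fact a1 a2 a3 a4)+)
      next
        assume a3: "\<sigma> 3 = 2"
        from h(4) d a1 a2 a3 have a4: "\<sigma> 4 = 1" by simp
        show ?thesis by (rule disjI2, rule disjI2, rule disjI2, rule disjI2, rule disjI2, rule disjI2, rule disjI2, rule disjI2, rule disjI2, rule disjI2, rule disjI2, rule disjI2, rule disjI2, rule disjI2, rule disjI2, rule disjI2, rule disjI2, rule disjI2, rule disjI2, rule disjI2, rule disjI2, rule disjI2, rule disjI2, intro conjI, (fact a1 a2 a3 a4)+)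
      qed
    qed
  qed
qed

lemma mset2_eq: "{#a, b#} = {#c, d#} \<longleftrightarrow> (a = c \<and> b = d) \<or> (a = d \<and> b = c)"
  by (metis add_mset_commute add_mset_eq_singleton_iff add_eq_conv_ex)

context
  fixes a b :: real and w :: "real \<Rightarrow> ereal"
  assumes ab: "a < b" and even: "\<forall>z\<in>{a - b .. b - a}. w (- z) = w z"
begin

lemma ev: "z \<in> {a - b .. b - a} \<Longrightarrow> w (- z) = w z" using even by auto

definition sorted4 :: "(nat \<Rightarrow> real) \<Rightarrow> bool" where
  "sorted4 x \<longleftrightarrow> (\<forall>i\<in>{1..4}. x i \<in> {a..b}) \<and> x 1 \<le> x 2 \<and> x 2 \<le> x 3 \<and> x 3 \<le> x 4"

lemma tbl:
  assumes "sorted4 x"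
  shows "w (x 1 - x 2) = w (x 2 - x 1)" "w (x 1 - x 3) = w (x 3 - x 1)" "w (x 1 - x 4) = w (x 4 - x 1)"
    "w (x 2 - x 3) = w (x 3 - x 2)" "w (x 2 - x 4) = w (x 4 - x 2)" "w (x 3 - x 4) = w (x 4 - x 3)"
proof -
  have x: "x 1 \<in> {a..b}" "x 2 \<in> {a..b}" "x 3 \<in> {a..b}" "x 4 \<in> {a..b}" "x 1 \<le> x 2" "x 2 \<le> x 3" "x 3 \<le> x 4"
    using assms unfolding sorted4_def by auto
  have g: "w (x i - x j) = w (x j - x i)" if "x i \<in> {a..b}" "x j \<in> {a..b}" for i j
  proof -
    have "x j - x i \<in> {a - b .. b - a}" using that by auto
    from ev[OF this] show ?thesis by simp
  qed
  show "w (x 1 - x 2) = w (x 2 - x 1)" by (rule g[OF x(1) x(2)])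
  show "w (x 1 - x 3) = w (x 3 - x 1)" by (rule g[OF x(1) x(3)])
  show "w (x 1 - x 4) = w (x 4 - x 1)" by (rule g[OF x(1) x(4)])
  show "w (x 2 - x 3) = w (x 3 - x 2)" by (rule g[OF x(2) x(3)])
  show "w (x 2 - x 4) = w (x 4 - x 2)" by (rule g[OF x(2) x(4)])
  show "w (x 3 - x 4) = w (x 4 - x 3)" by (rule g[OF x(3) x(4)])
qed

definition PC :: "(nat \<Rightarrow> real) \<Rightarrow> ereal set" where
  "PC x = {pair_cost (\<lambda>x y. w (x - y)) x \<sigma> | \<sigma>. \<sigma> permutes {1..4::nat}}"

lemma PC_finite: "finite (PC x)"
  unfolding PC_def by (rule finite_image_set[OF finite_permutations[OF finite_atLeastAtMost]])

lemma PC_mem: "\<sigma> permutes {1..4} \<Longrightarrow> pair_cost (\<lambda>x y. w (x - y)) x \<sigma> \<in> PC x"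
  unfolding PC_def by blast

lemma pc_id: "pair_cost (\<lambda>x y. w (x - y)) x id = w (x 1 - x 2) + w (x 3 - x 4)"
  unfolding pair_cost_def by simp
lemma pc_24: "pair_cost (\<lambda>x y. w (x - y)) x (Transposition.transpose 2 4) = w (x 1 - x 4) + w (x 3 - x 2)"
  unfolding pair_cost_def by simp
lemma pc_23: "pair_cost (\<lambda>x y. w (x - y)) x (Transposition.transpose 2 3) = w (x 1 - x 3) + w (x 2 - x 4)"
  unfolding pair_cost_def by simp
lemma perm_24: "Transposition.transpose 2 4 permutes {1..4::nat}" by (rule permutes_swap_id) auto
lemma perm_23: "Transposition.transpose 2 3 permutes {1..4::nat}" by (rule permutes_swap_id) auto

end

context
  fixes a b :: real and w :: "real \<Rightarrow> ereal"
  assumes ab: "a < b" and even: "\<forall>z\<in>{a - b .. b - a}. w (- z) = w z"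
    and roi: "\<forall>z\<in>{a - b .. b - a}. w z \<noteq> -\<infinity>" and cont: "continuous_on {a - b .. b - a} w"
begin

lemmas PCf = PC_finite[OF ab even]
lemmas PCm = PC_mem[OF ab even]
lemmas pcid = pc_id[OF ab even]
lemmas pc24 = pc_24[OF ab even]
lemmas pc23 = pc_23[OF ab even]
lemmas p24 = perm_24[OF ab even]
lemmas p23 = perm_23[OF ab even]
lemmas tb = tbl[OF ab even]
lemmas s4d = sorted4_def[OF ab even]
lemmas PCd = PC_def[OF ab even]

lemma basics:
  "(\<forall>x\<in>{a..b}. \<forall>y\<in>{a..b}. w (x - y) \<noteq> -\<infinity>)"
  "(\<forall>x\<in>{a..b}. \<forall>y\<in>{a..b}. w (x - y) = w (y - x))"
  "continuous_on ({a..b} \<times> {a..b}) (\<lambda>(x, y). w (x - y))"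
proof -
  show "\<forall>x\<in>{a..b}. \<forall>y\<in>{a..b}. w (x - y) \<noteq> -\<infinity>" using roi by auto
  show "\<forall>x\<in>{a..b}. \<forall>y\<in>{a..b}. w (x - y) = w (y - x)"
  proof (intro ballI)
    fix x y assume "x \<in> {a..b}" "y \<in> {a..b}"
    then have "y - x \<in> {a - b .. b - a}" by auto
    from ev[OF ab even this] show "w (x - y) = w (y - x)" by simp
  qed
  have "continuous_on ({a..b} \<times> {a..b}) (\<lambda>z. w (fst z - snd z))"
    by (rule continuous_on_compose2[OF cont]) (auto intro!: continuous_intros)
  then show "continuous_on ({a..b} \<times> {a..b}) (\<lambda>(x, y). w (x - y))"
    by (simp add: case_prod_unfold)
qed

lemma sorted_x:
  assumes "0 \<le> p" "0 \<le> q" "0 \<le> r" "p + q + r \<le> b - a"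
  shows "sorted4 a b (\<lambda>i. if i = 1 then a else if i = 2 then a + p else if i = 3 then a + p + q else a + p + q + r)"
proof -
  have e: "{1..4::nat} = {1,2,3,4}" by auto
  show ?thesis using assms unfolding s4d e by auto
qed

lemma costs:
  assumes "sorted4 a b x"
  shows "w (x 1 - x 3) + w (x 2 - x 4) = w ((x 2 - x 1) + (x 3 - x 2)) + w ((x 3 - x 2) + (x 4 - x 3))"
    "pair_cost (\<lambda>x y. w (x - y)) x id = w (x 2 - x 1) + w (x 4 - x 3)"
    "pair_cost (\<lambda>x y. w (x - y)) x (Transposition.transpose 2 4) = w ((x 2 - x 1) + (x 3 - x 2) + (x 4 - x 3)) + w (x 3 - x 2)"
  using tb[OF assms] pcid pc24 by simp_all

lemma WO_iff: "well_ordering (\<lambda>x y. w (x - y)) {a..b} \<longleftrightarrow> Jn w (b - a) \<and> Jb w (b - a)"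
proof
  assume WO: "well_ordering (\<lambda>x y. w (x - y)) {a..b}"
  have main: "w (x 1 - x 3) + w (x 2 - x 4) = Min (PC w x)" if "sorted4 a b x" for x
    using WO that unfolding well_ordering_def s4d PCd by auto
  have key: "w (p + q) + w (q + r) \<le> w p + w r \<and> w (p + q) + w (q + r) \<le> w q + w (p + q + r)"
    if pqr: "0 \<le> p" "0 \<le> q" "0 \<le> r" "p + q + r \<le> b - a" for p q r
  proof -
    define x where "x = (\<lambda>i::nat. if i = 1 then a else if i = 2 then a + p else if i = 3 then a + p + q else a + p + q + r)"
    have sx: "sorted4 a b x" unfolding x_def by (rule sorted_x[OF pqr])
    have xv: "x 2 - x 1 = p" "x 3 - x 2 = q" "x 4 - x 3 = r" unfolding x_def by auto
    have m: "w (p + q) + w (q + r) = Min (PC w x)" using main[OF sx] costs(1)[OF sx] xv by simp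
    have "Min (PC w x) \<le> pair_cost (\<lambda>x y. w (x - y)) x id"
      by (rule Min_le[OF PCf PCm]) (simp add: permutes_id)
    moreover have "Min (PC w x) \<le> pair_cost (\<lambda>x y. w (x - y)) x (Transposition.transpose 2 4)"
      by (rule Min_le[OF PCf PCm[OF p24]])
    ultimately show ?thesis using m costs(2,3)[OF sx] xv by (simp add: add.commute)
  qed
  show "Jn w (b - a) \<and> Jb w (b - a)" unfolding Jn_def Jb_def using key by blast
next
  assume J: "Jn w (b - a) \<and> Jb w (b - a)"
  show "well_ordering (\<lambda>x y. w (x - y)) {a..b}"
    unfolding well_ordering_def
  proof (intro conjI allI impI)
    show "\<forall>x\<in>{a..b}. \<forall>y\<in>{a..b}. w (x - y) \<noteq> -\<infinity>" "\<forall>x\<in>{a..b}. \<forall>y\<in>{a..b}. w (x - y) = w (y - x)"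
      "continuous_on ({a..b} \<times> {a..b}) (\<lambda>(x, y). w (x - y))" using basics by auto
    fix x :: "nat \<Rightarrow> real"
    assume "(\<forall>i\<in>{1..4}. x i \<in> {a..b}) \<and> x 1 \<le> x 2 \<and> x 2 \<le> x 3 \<and> x 3 \<le> x 4"
    then have sx: "sorted4 a b x" unfolding s4d by auto
    then have xs: "x 1 \<in> {a..b}" "x 4 \<in> {a..b}" "x 1 \<le> x 2" "x 2 \<le> x 3" "x 3 \<le> x 4" unfolding s4d by auto
    define p where "p = x 2 - x 1"
    define q where "q = x 3 - x 2"
    define r where "r = x 4 - x 3"
    have pqr: "0 \<le> p" "0 \<le> q" "0 \<le> r" "p + q + r \<le> b - a" using xs unfolding p_def q_def r_def by auto
    have d: "x 2 - x 1 = p" "x 3 - x 1 = p + q" "x 4 - x 1 = p + q + r" "x 3 - x 2 = q" "x 4 - x 2 = q + r"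
      "x 4 - x 3 = r" unfolding p_def q_def r_def by auto
    note T = tb[OF sx]
    have AB: "w (p + q) + w (q + r) \<le> w p + w r" using J pqr unfolding Jb_def by blast
    have AC: "w (p + q) + w (q + r) \<le> w q + w (p + q + r)" using J pqr unfolding Jn_def by blast
    have F: "w (p + q) + w (q + r) \<le> w p + w r" "w (p + q) + w (q + r) \<le> w r + w p"
      "w (p + q) + w (q + r) \<le> w q + w (p + q + r)" "w (p + q) + w (q + r) \<le> w (p + q + r) + w q"
      "w (p + q) + w (q + r) \<le> w (p + q) + w (q + r)" "w (p + q) + w (q + r) \<le> w (q + r) + w (p + q)"
      using AB AC by (simp_all add: add.commute)
    have lhs: "w (x 1 - x 3) + w (x 2 - x 4) = w (p + q) + w (q + r)" by (simp only: T d)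
    have "Min (PC w x) = w (x 1 - x 3) + w (x 2 - x 4)"
    proof (rule Min_eqI[OF PCf])
      show "w (x 1 - x 3) + w (x 2 - x 4) \<in> PC w x"
        using PCm[OF p23, of x] pc23 by simp
      fix y assume "y \<in> PC w x"
      then obtain \<sigma> where \<sigma>: "\<sigma> permutes {1..4}" and y: "y = pair_cost (\<lambda>x y. w (x - y)) x \<sigma>"
        unfolding PCd by blast
      show "w (x 1 - x 3) + w (x 2 - x 4) \<le> y"
        unfolding lhs y pair_cost_def using perm4[OF \<sigma>]
        by (elim disjE conjE; simp only: T d F)
    qed
    then show "w (x 1 - x 3) + w (x 2 - x 4) = Min {pair_cost (\<lambda>x y. w (x - y)) x \<sigma> |\<sigma>. \<sigma> permutes {1..4}}"
      unfolding PCd by simp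
  qed
qed


lemma SWO_iff: "strictly_well_ordering (\<lambda>x y. w (x - y)) {a..b} \<longleftrightarrow>
   Jn w (b - a) \<and> Jb w (b - a) \<and> SJn w (b - a) \<and> SJb w (b - a)"
proof
  assume S: "strictly_well_ordering (\<lambda>x y. w (x - y)) {a..b}"
  then have WO: "well_ordering (\<lambda>x y. w (x - y)) {a..b}" unfolding strictly_well_ordering_def by auto
  then have J: "Jn w (b - a)" "Jb w (b - a)" using WO_iff by auto
  have SC: "w (x 1 - x 3) + w (x 2 - x 4) = \<infinity> \<or> {# x 1, x 3 #} = {# x (\<sigma> 1), x (\<sigma> 2) #} \<or>
        {# x 1, x 3 #} = {# x (\<sigma> 3), x (\<sigma> 4) #}"
    if "sorted4 a b x" "\<sigma> permutes {1..4}" "w (x 1 - x 3) + w (x 2 - x 4) = pair_cost (\<lambda>x y. w (x - y)) x \<sigma>" for x \<sigma>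
  proof -
    have S2: "\<forall>x \<sigma>. (\<forall>i\<in>{1..4}. x i \<in> {a..b}) \<and> x 1 \<le> x 2 \<and> x 2 \<le> x 3 \<and> x 3 \<le> x 4
        \<and> \<sigma> permutes {1..4} \<and> w (x 1 - x 3) + w (x 2 - x 4) = pair_cost (\<lambda>x y. w (x - y)) x \<sigma> \<longrightarrow>
        w (x 1 - x 3) + w (x 2 - x 4) = \<infinity> \<or>
        {# x 1, x 3 #} = {# x (\<sigma> 1), x (\<sigma> 2) #} \<or>
        {# x 1, x 3 #} = {# x (\<sigma> 3), x (\<sigma> 4) #}"
      using S unfolding strictly_well_ordering_def by (elim conjE) assumption
    have pre: "(\<forall>i\<in>{1..4}. x i \<in> {a..b}) \<and> x 1 \<le> x 2 \<and> x 2 \<le> x 3 \<and> x 3 \<le> x 4"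
      using that(1) unfolding s4d .
    show ?thesis using S2[rule_format, of x \<sigma>] pre that(2,3) by blast
  qed
  have key: "(0 < q \<and> w (p + q) + w (q + r) \<noteq> \<infinity> \<longrightarrow> w (p + q) + w (q + r) < w p + w r) \<and>
             (0 < p \<and> 0 < r \<and> w (p + q) + w (q + r) \<noteq> \<infinity> \<longrightarrow> w (p + q) + w (q + r) < w q + w (p + q + r))"
    if pqr: "0 \<le> p" "0 \<le> q" "0 \<le> r" "p + q + r \<le> b - a" for p q r
  proof (intro conjI impI)
    define x where "x = (\<lambda>i::nat. if i = 1 then a else if i = 2 then a + p else if i = 3 then a + p + q else a + p + q + r)"
    have sx: "sorted4 a b x" unfolding x_def by (rule sorted_x[OF pqr])
    have xv: "x 2 - x 1 = p" "x 3 - x 2 = q" "x 4 - x 3 = r" unfolding x_def by auto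
    have l: "w (x 1 - x 3) + w (x 2 - x 4) = w (p + q) + w (q + r)" using costs(1)[OF sx] xv by simp
    have AB: "w (p + q) + w (q + r) \<le> w p + w r" using J(2) pqr unfolding Jb_def by blast
    have AC: "w (p + q) + w (q + r) \<le> w q + w (p + q + r)" using J(1) pqr unfolding Jn_def by blast
    {
      assume h: "0 < q \<and> w (p + q) + w (q + r) \<noteq> \<infinity>"
      show "w (p + q) + w (q + r) < w p + w r"
      proof (rule ccontr)
        assume "\<not> ?thesis"
        then have eq: "w (p + q) + w (q + r) = w p + w r" using AB by auto
        have ec: "w (x 1 - x 3) + w (x 2 - x 4) = pair_cost (\<lambda>x y. w (x - y)) x id"
          using l costs(2)[OF sx] xv eq by simp
        have o: "x 1 \<le> x 2" "x 2 < x 3" "x 3 \<le> x 4" using h pqr unfolding x_def by auto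
        from SC[OF sx permutes_id ec] show False using h l o by (auto simp: mset2_eq)
      qed
    }
    {
      assume h: "0 < p \<and> 0 < r \<and> w (p + q) + w (q + r) \<noteq> \<infinity>"
      show "w (p + q) + w (q + r) < w q + w (p + q + r)"
      proof (rule ccontr)
        assume "\<not> ?thesis"
        then have eq: "w (p + q) + w (q + r) = w q + w (p + q + r)" using AC by auto
        have ec: "w (x 1 - x 3) + w (x 2 - x 4) = pair_cost (\<lambda>x y. w (x - y)) x (Transposition.transpose 2 4)"
          using l costs(3)[OF sx] xv eq by (simp add: add.commute)
        have o: "x 1 < x 2" "x 2 \<le> x 3" "x 3 < x 4" using h pqr unfolding x_def by auto
        from SC[OF sx p24 ec] show False using h l o by (auto simp: mset2_eq)
      qed
    }
  qed
  show "Jn w (b - a) \<and> Jb w (b - a) \<and> SJn w (b - a) \<and> SJb w (b - a)"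
    unfolding SJn_def SJb_def using J key by blast
next
  assume J: "Jn w (b - a) \<and> Jb w (b - a) \<and> SJn w (b - a) \<and> SJb w (b - a)"
  have WO: "well_ordering (\<lambda>x y. w (x - y)) {a..b}" using WO_iff J by auto
  show "strictly_well_ordering (\<lambda>x y. w (x - y)) {a..b}"
    unfolding strictly_well_ordering_def
  proof (intro conjI WO allI impI)
    fix x :: "nat \<Rightarrow> real" and \<sigma> :: "nat \<Rightarrow> nat"
    assume h: "(\<forall>i\<in>{1..4}. x i \<in> {a..b}) \<and> x 1 \<le> x 2 \<and> x 2 \<le> x 3 \<and> x 3 \<le> x 4 \<and>
      \<sigma> permutes {1..4} \<and> w (x 1 - x 3) + w (x 2 - x 4) = pair_cost (\<lambda>x y. w (x - y)) x \<sigma>"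
    then have sx: "sorted4 a b x" unfolding s4d by auto
    have \<sigma>: "\<sigma> permutes {1..4}" and eq0: "w (x 1 - x 3) + w (x 2 - x 4) = pair_cost (\<lambda>x y. w (x - y)) x \<sigma>"
      using h by auto
    then have xs: "x 1 \<in> {a..b}" "x 4 \<in> {a..b}" "x 1 \<le> x 2" "x 2 \<le> x 3" "x 3 \<le> x 4" using h by auto
    define p where "p = x 2 - x 1"
    define q where "q = x 3 - x 2"
    define r where "r = x 4 - x 3"
    have pqr: "0 \<le> p" "0 \<le> q" "0 \<le> r" "p + q + r \<le> b - a" using xs unfolding p_def q_def r_def by auto
    have d: "x 2 - x 1 = p" "x 3 - x 1 = p + q" "x 4 - x 1 = p + q + r" "x 3 - x 2 = q" "x 4 - x 2 = q + r"
      "x 4 - x 3 = r" unfolding p_def q_def r_def by auto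
    note T = tb[OF sx]
    have lhs: "w (x 1 - x 3) + w (x 2 - x 4) = w (p + q) + w (q + r)" by (simp only: T d)
    have G1: "x 2 = x 3 \<or> w (p + q) + w (q + r) = \<infinity> \<or>
       (w (p + q) + w (q + r) < w p + w r \<and> w (p + q) + w (q + r) < w r + w p)"
    proof (cases "q = 0")
      case True then show ?thesis unfolding q_def by auto
    next
      case False
      then have "w (p + q) + w (q + r) \<noteq> \<infinity> \<longrightarrow> w (p + q) + w (q + r) < w p + w r"
        using J pqr unfolding SJb_def by auto
      then show ?thesis by (auto simp: add.commute)
    qed
    have G2: "x 1 = x 2 \<or> x 3 = x 4 \<or> w (p + q) + w (q + r) = \<infinity> \<or>
       (w (p + q) + w (q + r) < w q + w (p + q + r) \<and> w (p + q) + w (q + r) < w (p + q + r) + w q)"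
    proof (cases "p = 0 \<or> r = 0")
      case True then show ?thesis unfolding p_def r_def by auto
    next
      case False
      then have "w (p + q) + w (q + r) \<noteq> \<infinity> \<longrightarrow> w (p + q) + w (q + r) < w q + w (p + q + r)"
        using J pqr unfolding SJn_def by auto
      then show ?thesis by (auto simp: add.commute)
    qed
    show "w (x 1 - x 3) + w (x 2 - x 4) = \<infinity> \<or> {# x 1, x 3 #} = {# x (\<sigma> 1), x (\<sigma> 2) #} \<or>
        {# x 1, x 3 #} = {# x (\<sigma> 3), x (\<sigma> 4) #}"
      using perm4[OF \<sigma>] unfolding lhs
      by (elim disjE conjE; insert eq0 G1 G2; simp only: T d lhs pair_cost_def; auto simp: mset2_eq)
  qed
qed

end

theorem mainTheorem2:
  fixes a b :: real and w :: "real \<Rightarrow> ereal"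
  assumes ab: "a < b"
    and real_or_inf: "\<forall>z\<in>{a - b .. b - a}. w z \<noteq> -\<infinity>"
    and cont: "continuous_on {a - b .. b - a} w"
    and even: "\<forall>z\<in>{a - b .. b - a}. w (- z) = w z"
  shows "(well_ordering (\<lambda>x y. w (x - y)) {a..b} \<longleftrightarrow>
            ereal_convex_on {0 .. b - a} w \<and>
            (\<forall>d0 d1 \<delta>. 0 < d0 \<and> 0 < d1 \<and> 0 < \<delta> \<and> d0 + d1 + \<delta> \<le> b - a \<longrightarrow>
               w (d0 + \<delta>) + w (d1 + \<delta>) \<le> w d1 + w d0))
       \<and> (strictly_well_ordering (\<lambda>x y. w (x - y)) {a..b} \<longleftrightarrow>
            ereal_strictly_convex_on {0 .. b - a} w \<and>
            (\<forall>d0 d1 \<delta>. 0 < d0 \<and> 0 < d1 \<and> 0 < \<delta> \<and> d0 + d1 + \<delta> \<le> b - a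
                \<and> w (d0 + \<delta>) + w (d1 + \<delta>) \<noteq> \<infinity> \<longrightarrow>
               w (d0 + \<delta>) + w (d1 + \<delta>) < w d1 + w d0))"
proof -
  define L where "L = b - a"
  have sub: "{0..L} \<subseteq> {a - b .. b - a}" unfolding L_def using ab by auto
  have H1: "\<forall>z\<in>{0..L}. w z \<noteq> -\<infinity>" using real_or_inf sub by auto
  have H2: "continuous_on {0..L} w" using continuous_on_subset[OF cont sub] .
  have WO: "well_ordering (\<lambda>x y. w (x - y)) {a..b} \<longleftrightarrow> Jn w L \<and> Jb w L"
    using WO_iff[OF ab even real_or_inf cont] unfolding L_def .
  have SWO: "strictly_well_ordering (\<lambda>x y. w (x - y)) {a..b} \<longleftrightarrow> Jn w L \<and> Jb w L \<and> SJn w L \<and> SJb w L"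
    using SWO_iff[OF ab even real_or_inf cont] unfolding L_def .
  have P1: "Jn w L \<and> Jb w L \<longleftrightarrow> ereal_convex_on {0..L} w \<and> ii w L"
    using conv_of_Jn[OF H1 H2] Jn_of_conv[OF H1] Jb_ii ii_Jb[OF H1 H2] by blast
  have P2: "Jn w L \<and> Jb w L \<and> SJn w L \<and> SJb w L \<longleftrightarrow> ereal_strictly_convex_on {0..L} w \<and> sii w L"
  proof
    assume J: "Jn w L \<and> Jb w L \<and> SJn w L \<and> SJb w L"
    show "ereal_strictly_convex_on {0..L} w \<and> sii w L"
      using sc_of[OF H1 H2] SJb_sii J by blast
  next
    assume S: "ereal_strictly_convex_on {0..L} w \<and> sii w L"
    then have C: "ereal_convex_on {0..L} w" unfolding ereal_strictly_convex_on_def by auto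
    have "ii w L" using sii_ii[OF H1 H2] S by auto
    then show "Jn w L \<and> Jb w L \<and> SJn w L \<and> SJb w L"
      using Jn_of_conv[OF H1 C] ii_Jb[OF H1 H2] SJn_of_sc[OF H1] sii_SJb[OF H1 H2 C] S by blast
  qed
  show ?thesis using WO SWO P1 P2 unfolding ii_def sii_def L_def by blast
qed


end
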